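(* Let $\mathsf{X}$ be a complex random variable with $\mathbb{E}[|\mathsf{X}|^2]=1$, let $L\ge1$, and let $x_1,\dots,x_L$ be i.i.d. copies of $\mathsf{X}$. Assume there is a constant $\delta>0$ with $|x_\ell|^2\ge\delta$ almost surely for all $\ell$. Let $P>0$, $\sigma_{\mathrm s}^2>0$, and define the average conditional CRB $$\overline{\mathrm{CRB}}_{h_{\mathrm s}}=\frac{\sigma_{\mathrm s}^2}{P}\,\mathbb{E}\!\left[\frac{1}{\sum_{\ell=1}^L|x_\ell|^2}\right].$$ Then $$\overline{\mathrm{CRB}}_{h_{\mathrm s}}\le\frac{\sigma_{\mathrm s}^2}{P}\left[\frac1L+\frac{\mathrm{Var}(|\mathsf{X}|^2)}{L^2\delta}\right].$$
   Context: In the sensing model $\boldsymbol y_{\mathrm s}=\sqrt{P}h_{\mathrm s}\boldsymbol x+\boldsymbol z_{\mathrm s}$ with noise $\mathcal{CN}(\boldsymbol 0,\sigma_{\mathrm s}^2\boldsymbol I_L)$, the conditional CRB for estimating $h_{\mathrm s}$ given $\boldsymbol x=(x_1,\dots,x_L)$ is $\sigma_{\mathrm s}^2/(P\|\boldsymbol x\|^2)$, and the average conditional CRB is its expectation over $\boldsymbol x$, as defined in the claim. The symbols are normalized so that $\mathbb{E}[|\mathsf{X}|^2]=1$. *)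

theory Defs
  imports "HOL-Probability.Probability"
begin

definition (in prob_space) avg_CRB :: "real \<Rightarrow> real \<Rightarrow> nat \<Rightarrow> (nat \<Rightarrow> 'a \<Rightarrow> complex) \<Rightarrow> real" where
  "avg_CRB sigma2 P L x = sigma2 / P * expectation (\<lambda>\<omega>. 1 / (\<Sum>l<L. (cmod (x l \<omega>))\<^sup>2))"

end

theory Submission
  imports Defs
begin

lemma pw_ineq:
  fixes S L d :: real
  assumes "L > 0" "d > 0" "S \<ge> L * d"
  shows "1 / S \<le> 1 / L - (S - L) / L^2 + (S - L)^2 / (L^2 * (L * d))"
proof -
  have S0: "S > 0" using assms by (metis mult_pos_pos order_less_le_trans)
  have eq: "1 / S = 1 / L - (S - L) / L^2 + (S - L)^2 / (L^2 * S)"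
    using S0 assms(1) by (simp add: field_simps power2_eq_square)
  have "(S - L)^2 / (L^2 * S) \<le> (S - L)^2 / (L^2 * (L * d))"
    using assms S0 by (intro divide_left_mono mult_left_mono) auto
  then show ?thesis using eq by linarith
qed

theorem lemma2:
  fixes M :: "'a measure" and X :: "'a \<Rightarrow> complex" and x :: "nat \<Rightarrow> 'a \<Rightarrow> complex"
    and L :: nat and \<delta> P sigma2 :: real
  assumes "prob_space M"
    and "X \<in> borel_measurable M"
    and "integrable M (\<lambda>\<omega>. (cmod (X \<omega>))\<^sup>2)"
    and "prob_space.expectation M (\<lambda>\<omega>. (cmod (X \<omega>))\<^sup>2) = 1"
    and "integrable M (\<lambda>\<omega>. ((cmod (X \<omega>))\<^sup>2)\<^sup>2)"
    and "L \<ge> 1"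
    and "prob_space.indep_vars M (\<lambda>_. borel) x {..<L}"
    and "\<And>l. l < L \<Longrightarrow> distr M borel (x l) = distr M borel X"
    and "\<delta> > 0"
    and "\<And>l. l < L \<Longrightarrow> (AE \<omega> in M. (cmod (x l \<omega>))\<^sup>2 \<ge> \<delta>)"
    and "P > 0" and "sigma2 > 0"
  shows "prob_space.avg_CRB M sigma2 P L x
           \<le> sigma2 / P * (1 / real L
               + prob_space.variance M (\<lambda>\<omega>. (cmod (X \<omega>))\<^sup>2) / ((real L)\<^sup>2 * \<delta>))"
proof -
  interpret prob_space M by fact
  note Xm[measurable] = assms(2)
  have xm[measurable]: "x l \<in> borel_measurable M" if "l < L" for l
    using assms(7) that unfolding indep_vars_def by auto
  have transI: "integrable M (\<lambda>\<omega>. f (x l \<omega>)) = integrable M (\<lambda>\<omega>. f (X \<omega>))"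
    if "l < L" "f \<in> borel_measurable borel" for l and f :: "complex \<Rightarrow> real"
  proof -
    have "integrable M (\<lambda>\<omega>. f (x l \<omega>)) = integrable (distr M borel (x l)) f"
      using that by (subst integrable_distr_eq) (auto intro: xm)
    also have "\<dots> = integrable (distr M borel X) f" using assms(8) that by simp
    also have "\<dots> = integrable M (\<lambda>\<omega>. f (X \<omega>))"
      using that by (subst integrable_distr_eq) auto
    finally show ?thesis .
  qed
  have transE: "expectation (\<lambda>\<omega>. f (x l \<omega>)) = expectation (\<lambda>\<omega>. f (X \<omega>))"
    if "l < L" "f \<in> borel_measurable borel" for l and f :: "complex \<Rightarrow> real"
  proof -
    have "expectation (\<lambda>\<omega>. f (x l \<omega>)) = integral\<^sup>L (distr M borel (x l)) f"
      using that by (subst integral_distr) (auto intro: xm)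
    also have "\<dots> = integral\<^sup>L (distr M borel X) f" using assms(8) that by simp
    also have "\<dots> = expectation (\<lambda>\<omega>. f (X \<omega>))"
      using that by (subst integral_distr) auto
    finally show ?thesis .
  qed
  define V where "V = variance (\<lambda>\<omega>. (cmod (X \<omega>))\<^sup>2)"
  define Z where "Z l \<omega> = (cmod (x l \<omega>))\<^sup>2 - 1" for l \<omega>
  have intX1: "integrable M (\<lambda>\<omega>. (cmod (X \<omega>))\<^sup>2 - 1)"
    using assms(3) by auto
  have intX2: "integrable M (\<lambda>\<omega>. ((cmod (X \<omega>))\<^sup>2 - 1)\<^sup>2)"
  proof -
    have "integrable M (\<lambda>\<omega>. ((cmod (X \<omega>))\<^sup>2)\<^sup>2 - 2 * (cmod (X \<omega>))\<^sup>2 + 1)"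
      using assms(3,5) by auto
    moreover have "\<And>\<omega>. ((cmod (X \<omega>))\<^sup>2)\<^sup>2 - 2 * (cmod (X \<omega>))\<^sup>2 + 1 = ((cmod (X \<omega>))\<^sup>2 - 1)\<^sup>2"
      by (simp add: power2_diff)
    ultimately show ?thesis by simp
  qed
  have V_eq: "V = expectation (\<lambda>\<omega>. ((cmod (X \<omega>))\<^sup>2 - 1)\<^sup>2)"
    unfolding V_def using assms(4) by simp
  have EX1: "expectation (\<lambda>\<omega>. (cmod (X \<omega>))\<^sup>2 - 1) = 0"
    using assms(3,4) prob_space by simp
  have intZ: "integrable M (Z l)" if "l < L" for l
    unfolding Z_def using transI[OF that, of "\<lambda>z. (cmod z)\<^sup>2 - 1"] intX1 by simp
  have intZ2: "integrable M (\<lambda>\<omega>. (Z l \<omega>)\<^sup>2)" if "l < L" for l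
    unfolding Z_def using transI[OF that, of "\<lambda>z. ((cmod z)\<^sup>2 - 1)\<^sup>2"] intX2 by simp
  have EZ: "expectation (Z l) = 0" if "l < L" for l
    unfolding Z_def using transE[OF that, of "\<lambda>z. (cmod z)\<^sup>2 - 1"] EX1 by simp
  have EZ2: "expectation (\<lambda>\<omega>. (Z l \<omega>)\<^sup>2) = V" if "l < L" for l
    unfolding Z_def V_eq using transE[OF that, of "\<lambda>z. ((cmod z)\<^sup>2 - 1)\<^sup>2"] by simp
  have indZ: "indep_vars (\<lambda>_. borel) Z {..<L}"
    unfolding Z_def
    by (rule indep_vars_compose2[OF assms(7), where Y="\<lambda>_ z. (cmod z)\<^sup>2 - 1"]) auto
  have intZZ: "integrable M (\<lambda>\<omega>. Z i \<omega> * Z j \<omega>)" and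
    EZZ: "expectation (\<lambda>\<omega>. Z i \<omega> * Z j \<omega>) = (if i = j then V else 0)"
    if "i < L" "j < L" for i j
  proof -
    have "integrable M (\<lambda>\<omega>. Z i \<omega> * Z j \<omega>) \<and>
      expectation (\<lambda>\<omega>. Z i \<omega> * Z j \<omega>) = (if i = j then V else 0)"
    proof (cases "i = j")
      case True
      then show ?thesis using intZ2[OF that(1)] EZ2[OF that(1)] by (simp add: power2_eq_square)
    next
      case False
      have ind2: "indep_vars (\<lambda>_. borel) Z {i, j}"
        using indZ by (rule indep_vars_subset) (use that in auto)
      have i2: "\<And>k. k \<in> {i, j} \<Longrightarrow> integrable M (Z k)" using intZ that by auto
      have "integrable M (\<lambda>\<omega>. \<Prod>k\<in>{i,j}. Z k \<omega>)"
        by (rule indep_vars_integrable[OF _ ind2 i2]) auto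
      moreover have "expectation (\<lambda>\<omega>. \<Prod>k\<in>{i,j}. Z k \<omega>) = (\<Prod>k\<in>{i,j}. expectation (Z k))"
        by (rule indep_vars_lebesgue_integral[OF _ ind2 i2]) auto
      ultimately show ?thesis using False EZ that by simp
    qed
    then show "integrable M (\<lambda>\<omega>. Z i \<omega> * Z j \<omega>)"
      "expectation (\<lambda>\<omega>. Z i \<omega> * Z j \<omega>) = (if i = j then V else 0)" by auto
  qed
  define D where "D \<omega> = (\<Sum>l<L. Z l \<omega>)" for \<omega>
  have D2: "(D \<omega>)\<^sup>2 = (\<Sum>i<L. \<Sum>j<L. Z i \<omega> * Z j \<omega>)" for \<omega>
    unfolding D_def power2_eq_square by (rule sum_product)
  have intD: "integrable M D" unfolding D_def using intZ by auto
  have ED: "expectation D = 0" unfolding D_def using intZ EZ by (simp add: Bochner_Integration.integral_sum)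
  have intD2: "integrable M (\<lambda>\<omega>. (D \<omega>)\<^sup>2)" unfolding D2
  proof (rule Bochner_Integration.integrable_sum)
    fix i assume i: "i \<in> {..<L}"
    show "integrable M (\<lambda>\<omega>. \<Sum>j<L. Z i \<omega> * Z j \<omega>)"
      by (rule Bochner_Integration.integrable_sum) (use i intZZ in auto)
  qed
  have ED2: "expectation (\<lambda>\<omega>. (D \<omega>)\<^sup>2) = real L * V"
  proof -
    have "expectation (\<lambda>\<omega>. (D \<omega>)\<^sup>2) = (\<Sum>i<L. \<Sum>j<L. expectation (\<lambda>\<omega>. Z i \<omega> * Z j \<omega>))"
      unfolding D2
    proof (subst Bochner_Integration.integral_sum)
      fix i assume i: "i \<in> {..<L}"
      show "integrable M (\<lambda>\<omega>. \<Sum>j<L. Z i \<omega> * Z j \<omega>)"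
        by (rule Bochner_Integration.integrable_sum) (use i intZZ in auto)
    next
      show "(\<Sum>i<L. expectation (\<lambda>\<omega>. \<Sum>j<L. Z i \<omega> * Z j \<omega>)) =
        (\<Sum>i<L. \<Sum>j<L. expectation (\<lambda>\<omega>. Z i \<omega> * Z j \<omega>))"
        by (intro sum.cong refl Bochner_Integration.integral_sum) (use intZZ in auto)
    qed
    also have "\<dots> = (\<Sum>i<L. \<Sum>j<L. (if i = j then V else 0))" using EZZ by simp
    also have "\<dots> = real L * V" by simp
    finally show ?thesis .
  qed
  have SD: "(\<Sum>l<L. (cmod (x l \<omega>))\<^sup>2) = D \<omega> + real L" for \<omega>
    unfolding D_def Z_def by (simp add: sum_subtractf)
  have Lpos: "real L > 0" using assms(6) by simp
  define g where "g \<omega> = 1 / real L - D \<omega> / (real L)^2 + (D \<omega>)\<^sup>2 / ((real L)^2 * (real L * \<delta>))" for \<omega>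
  have AEall: "AE \<omega> in M. \<forall>l\<in>{..<L}. (cmod (x l \<omega>))\<^sup>2 \<ge> \<delta>"
    by (rule eventually_ball_finite) (use assms(10) in auto)
  have AEbound: "AE \<omega> in M. D \<omega> + real L \<ge> real L * \<delta>"
    using AEall
  proof eventually_elim
    case (elim \<omega>)
    have "real L * \<delta> = (\<Sum>l<L. \<delta>)" by simp
    also have "\<dots> \<le> (\<Sum>l<L. (cmod (x l \<omega>))\<^sup>2)" using elim by (intro sum_mono) auto
    finally show ?case using SD by simp
  qed
  have AE1: "AE \<omega> in M. 1 / (\<Sum>l<L. (cmod (x l \<omega>))\<^sup>2) \<le> g \<omega>"
    using AEbound
  proof eventually_elim
    case (elim \<omega>)
    show ?case unfolding SD g_def using pw_ineq[OF Lpos assms(9) elim] by simp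
  qed
  have AE2: "AE \<omega> in M. 0 \<le> g \<omega>"
    using AEbound
  proof eventually_elim
    case (elim \<omega>)
    have "0 < real L * \<delta>" using Lpos assms(9) by simp
    then have "0 \<le> 1 / (D \<omega> + real L)" using elim by simp
    also have "\<dots> \<le> g \<omega>" unfolding g_def using pw_ineq[OF Lpos assms(9) elim] by simp
    finally show ?case .
  qed
  have intg: "integrable M g" unfolding g_def using intD intD2 by auto
  have Eg: "expectation g = 1 / real L + V / ((real L)\<^sup>2 * \<delta>)"
  proof -
    have "expectation g = 1 / real L - expectation D / (real L)^2
        + expectation (\<lambda>\<omega>. (D \<omega>)\<^sup>2) / ((real L)^2 * (real L * \<delta>))"
      unfolding g_def using intD intD2 prob_space by simp
    also have "\<dots> = 1 / real L + V / ((real L)\<^sup>2 * \<delta>)"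
      using ED ED2 Lpos by (simp add: field_simps power2_eq_square)
    finally show ?thesis .
  qed
  have "expectation (\<lambda>\<omega>. 1 / (\<Sum>l<L. (cmod (x l \<omega>))\<^sup>2)) \<le> expectation g"
    by (rule integral_mono_AE'[OF intg AE1 AE2])
  then have "expectation (\<lambda>\<omega>. 1 / (\<Sum>l<L. (cmod (x l \<omega>))\<^sup>2)) \<le> 1 / real L + V / ((real L)\<^sup>2 * \<delta>)"
    using Eg by simp
  then show ?thesis
    unfolding avg_CRB_def V_def using assms(11,12)
    by (intro mult_left_mono) auto
qed

end
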